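(* For an almost contact metric manifold $\mathcal M$ with structure $(\phi,\xi,\eta,g)$ the following are equivalent: (1) $\mathcal M$ is a CR-manifold and $h=0$; (2) $\mathcal M$ is $\eta$-normal and $h=0$; (3) $\mathcal M$ is normal, i.e. $N^{(1)}=0$ identically.
   Context: Almost contact metric structure $(\phi,\xi,\eta,g)$: $\phi^2=-\mathrm{Id}+\eta\otimes\xi$, $\eta(\xi)=1$, $g(\phi X,\phi Y)=g(X,Y)-\eta(X)\eta(Y)$. Convention $2d\eta(X,Y)=X\eta(Y)-Y\eta(X)-\eta([X,Y])$. $[\phi,\phi](X,Y)=\phi^2[X,Y]+[\phi X,\phi Y]-\phi[\phi X,Y]-\phi[X,\phi Y]$, $N^{(1)}=[\phi,\phi]+2d\eta\otimes\xi$; $h=\tfrac12\mathcal L_\xi\phi$. $\eta$-normal: $N^{(1)}(X,Y)=0$ whenever $\eta(X)=\eta(Y)=0$. CR-manifold: for all $X,Y$ with $\eta(X)=\eta(Y)=0$ there is $Z$ with $\eta(Z)=0$ and $[X-i\phi X,Y-i\phi Y]=Z-i\phi Z$. *)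

theory Defs
  imports Complex_Main "HOL-Library.Function_Algebras"
begin

text \<open>
  Algebraic model of a smooth manifold M (points of type 'm):
  F is the algebra of smooth real functions on M (a set of functions 'm => real),
  smooth vector fields are the derivations of F (acting on functions), the Lie bracket
  is the commutator, and tensor fields are F-linear maps.
\<close>

type_synonym 'm vfield = "('m \<Rightarrow> real) \<Rightarrow> ('m \<Rightarrow> real)"

definition fun_algebra :: "('m \<Rightarrow> real) set \<Rightarrow> bool" where
  "fun_algebra F \<longleftrightarrow>
     (\<forall>c. (\<lambda>_. c) \<in> F) \<and>
     (\<forall>f\<in>F. \<forall>g\<in>F. f + g \<in> F \<and> f * g \<in> F \<and> - f \<in> F)"

definition vfields :: "('m \<Rightarrow> real) set \<Rightarrow> 'm vfield set" where
  "vfields F = {X.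
     (\<forall>f\<in>F. X f \<in> F) \<and>
     (\<forall>c. X (\<lambda>_. c) = 0) \<and>
     (\<forall>f\<in>F. \<forall>g\<in>F. X (f + g) = X f + X g \<and> X (f * g) = X f * g + f * X g) \<and>
     (\<forall>h. h \<notin> F \<longrightarrow> X h = 0)}"

definition smv :: "('m \<Rightarrow> real) \<Rightarrow> 'm vfield \<Rightarrow> 'm vfield" where
  "smv f X = (\<lambda>h. f * X h)"

definition lie :: "'m vfield \<Rightarrow> 'm vfield \<Rightarrow> 'm vfield" where
  "lie X Y = (\<lambda>h. X (Y h) - Y (X h))"

definition tensor11 :: "('m \<Rightarrow> real) set \<Rightarrow> ('m vfield \<Rightarrow> 'm vfield) \<Rightarrow> bool" where
  "tensor11 F \<phi> \<longleftrightarrow>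
     (\<forall>X\<in>vfields F. \<phi> X \<in> vfields F) \<and>
     (\<forall>X\<in>vfields F. \<forall>Y\<in>vfields F. \<phi> (X + Y) = \<phi> X + \<phi> Y) \<and>
     (\<forall>f\<in>F. \<forall>X\<in>vfields F. \<phi> (smv f X) = smv f (\<phi> X))"

definition one_form :: "('m \<Rightarrow> real) set \<Rightarrow> ('m vfield \<Rightarrow> ('m \<Rightarrow> real)) \<Rightarrow> bool" where
  "one_form F \<eta> \<longleftrightarrow>
     (\<forall>X\<in>vfields F. \<eta> X \<in> F) \<and>
     (\<forall>X\<in>vfields F. \<forall>Y\<in>vfields F. \<eta> (X + Y) = \<eta> X + \<eta> Y) \<and>
     (\<forall>f\<in>F. \<forall>X\<in>vfields F. \<eta> (smv f X) = f * \<eta> X)"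

definition riem_metric :: "('m \<Rightarrow> real) set \<Rightarrow> ('m vfield \<Rightarrow> 'm vfield \<Rightarrow> ('m \<Rightarrow> real)) \<Rightarrow> bool" where
  "riem_metric F g \<longleftrightarrow>
     (\<forall>X\<in>vfields F. \<forall>Y\<in>vfields F. g X Y \<in> F \<and> g X Y = g Y X) \<and>
     (\<forall>X\<in>vfields F. \<forall>Y\<in>vfields F. \<forall>Z\<in>vfields F. g (X + Y) Z = g X Z + g Y Z) \<and>
     (\<forall>f\<in>F. \<forall>X\<in>vfields F. \<forall>Y\<in>vfields F. g (smv f X) Y = f * g X Y) \<and>
     (\<forall>X\<in>vfields F. (\<forall>p. g X X p \<ge> 0) \<and> (g X X = 0 \<longrightarrow> X = 0))"

definition almost_contact_metric ::
  "('m \<Rightarrow> real) set \<Rightarrow> ('m vfield \<Rightarrow> 'm vfield) \<Rightarrow> 'm vfield \<Rightarrow>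
   ('m vfield \<Rightarrow> ('m \<Rightarrow> real)) \<Rightarrow> ('m vfield \<Rightarrow> 'm vfield \<Rightarrow> ('m \<Rightarrow> real)) \<Rightarrow> bool" where
  "almost_contact_metric F \<phi> \<xi> \<eta> g \<longleftrightarrow>
     fun_algebra F \<and> tensor11 F \<phi> \<and> \<xi> \<in> vfields F \<and> one_form F \<eta> \<and> riem_metric F g \<and>
     (\<forall>X\<in>vfields F. \<phi> (\<phi> X) = - X + smv (\<eta> X) \<xi>) \<and>
     \<eta> \<xi> = 1 \<and>
     (\<forall>X\<in>vfields F. \<forall>Y\<in>vfields F. g (\<phi> X) (\<phi> Y) = g X Y - \<eta> X * \<eta> Y)"

definition two_d_eta :: "('m vfield \<Rightarrow> ('m \<Rightarrow> real)) \<Rightarrow> 'm vfield \<Rightarrow> 'm vfield \<Rightarrow> ('m \<Rightarrow> real)" where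
  "two_d_eta \<eta> X Y = X (\<eta> Y) - Y (\<eta> X) - \<eta> (lie X Y)"

definition nijenhuis :: "('m vfield \<Rightarrow> 'm vfield) \<Rightarrow> 'm vfield \<Rightarrow> 'm vfield \<Rightarrow> 'm vfield" where
  "nijenhuis \<phi> X Y = \<phi> (\<phi> (lie X Y)) + lie (\<phi> X) (\<phi> Y) - \<phi> (lie (\<phi> X) Y) - \<phi> (lie X (\<phi> Y))"

definition N1 :: "('m vfield \<Rightarrow> 'm vfield) \<Rightarrow> 'm vfield \<Rightarrow> ('m vfield \<Rightarrow> ('m \<Rightarrow> real)) \<Rightarrow>
    'm vfield \<Rightarrow> 'm vfield \<Rightarrow> 'm vfield" where
  "N1 \<phi> \<xi> \<eta> X Y = nijenhuis \<phi> X Y + smv (two_d_eta \<eta> X Y) \<xi>"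

text \<open>h = 1/2 L_\<xi> \<phi>, with (L_\<xi> \<phi>) X = [\<xi>, \<phi> X] - \<phi> [\<xi>, X].\<close>
definition h_op :: "('m vfield \<Rightarrow> 'm vfield) \<Rightarrow> 'm vfield \<Rightarrow> 'm vfield \<Rightarrow> 'm vfield" where
  "h_op \<phi> \<xi> X = smv (\<lambda>_. 1/2) (lie \<xi> (\<phi> X) - \<phi> (lie \<xi> X))"

definition h_zero :: "('m \<Rightarrow> real) set \<Rightarrow> ('m vfield \<Rightarrow> 'm vfield) \<Rightarrow> 'm vfield \<Rightarrow> bool" where
  "h_zero F \<phi> \<xi> \<longleftrightarrow> (\<forall>X\<in>vfields F. h_op \<phi> \<xi> X = 0)"

definition eta_normal :: "('m \<Rightarrow> real) set \<Rightarrow> ('m vfield \<Rightarrow> 'm vfield) \<Rightarrow> 'm vfield \<Rightarrow>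
    ('m vfield \<Rightarrow> ('m \<Rightarrow> real)) \<Rightarrow> bool" where
  "eta_normal F \<phi> \<xi> \<eta> \<longleftrightarrow>
     (\<forall>X\<in>vfields F. \<forall>Y\<in>vfields F. \<eta> X = 0 \<longrightarrow> \<eta> Y = 0 \<longrightarrow> N1 \<phi> \<xi> \<eta> X Y = 0)"

definition normal :: "('m \<Rightarrow> real) set \<Rightarrow> ('m vfield \<Rightarrow> 'm vfield) \<Rightarrow> 'm vfield \<Rightarrow>
    ('m vfield \<Rightarrow> ('m \<Rightarrow> real)) \<Rightarrow> bool" where
  "normal F \<phi> \<xi> \<eta> \<longleftrightarrow> (\<forall>X\<in>vfields F. \<forall>Y\<in>vfields F. N1 \<phi> \<xi> \<eta> X Y = 0)"

text \<open>Complex vector fields A + iB represented as pairs (A, B); the Lie bracket is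
  extended complex-bilinearly.\<close>
definition clie :: "'m vfield \<times> 'm vfield \<Rightarrow> 'm vfield \<times> 'm vfield \<Rightarrow> 'm vfield \<times> 'm vfield" where
  "clie P Q = (lie (fst P) (fst Q) - lie (snd P) (snd Q), lie (fst P) (snd Q) + lie (snd P) (fst Q))"

definition cr_vec :: "('m vfield \<Rightarrow> 'm vfield) \<Rightarrow> 'm vfield \<Rightarrow> 'm vfield \<times> 'm vfield" where
  "cr_vec \<phi> X = (X, - \<phi> X)"

definition CR_manifold :: "('m \<Rightarrow> real) set \<Rightarrow> ('m vfield \<Rightarrow> 'm vfield) \<Rightarrow>
    ('m vfield \<Rightarrow> ('m \<Rightarrow> real)) \<Rightarrow> bool" where
  "CR_manifold F \<phi> \<eta> \<longleftrightarrow>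
     (\<forall>X\<in>vfields F. \<forall>Y\<in>vfields F. \<eta> X = 0 \<longrightarrow> \<eta> Y = 0 \<longrightarrow>
        (\<exists>Z\<in>vfields F. \<eta> Z = 0 \<and> clie (cr_vec \<phi> X) (cr_vec \<phi> Y) = cr_vec \<phi> Z))"

end

theory Submission
  imports Defs
begin

context
  fixes F :: "('m \<Rightarrow> real) set"
    and \<phi> :: "'m vfield \<Rightarrow> 'm vfield" and \<xi> :: "'m vfield"
    and \<eta> :: "'m vfield \<Rightarrow> ('m \<Rightarrow> real)" and g :: "'m vfield \<Rightarrow> 'm vfield \<Rightarrow> ('m \<Rightarrow> real)"
  assumes acm: "almost_contact_metric F \<phi> \<xi> \<eta> g"
begin

lemma FA: "fun_algebra F" using acm by (simp add: almost_contact_metric_def)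

lemma F_const[simp]: "(\<lambda>_. c) \<in> F" using FA by (simp add: fun_algebra_def)
lemma F_zero[simp]: "0 \<in> F" using F_const[of 0] by (simp add: zero_fun_def)
lemma F_one[simp]: "1 \<in> F" using F_const[of 1] by (simp add: one_fun_def)
lemma F_add[simp]: "f \<in> F \<Longrightarrow> h \<in> F \<Longrightarrow> f + h \<in> F" using FA by (simp add: fun_algebra_def)
lemma F_mult[simp]: "f \<in> F \<Longrightarrow> h \<in> F \<Longrightarrow> f * h \<in> F" using FA by (simp add: fun_algebra_def)
lemma F_uminus[simp]: "f \<in> F \<Longrightarrow> - f \<in> F" using FA unfolding fun_algebra_def by blast
lemma F_diff[simp]: "f \<in> F \<Longrightarrow> h \<in> F \<Longrightarrow> f - h \<in> F"
  by (metis F_add F_uminus diff_conv_add_uminus)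

lemma V_app[simp]: "X \<in> vfields F \<Longrightarrow> f \<in> F \<Longrightarrow> X f \<in> F" unfolding vfields_def by blast
lemma V_out: "X \<in> vfields F \<Longrightarrow> h \<notin> F \<Longrightarrow> X h = 0" unfolding vfields_def by blast
lemma V_const[simp]: "X \<in> vfields F \<Longrightarrow> X (\<lambda>_. c) = 0" unfolding vfields_def by blast
lemma V_zero[simp]: "X \<in> vfields F \<Longrightarrow> X 0 = 0" using V_const[of X 0] by (simp only: zero_fun_def)
lemma V_one[simp]: "X \<in> vfields F \<Longrightarrow> X 1 = 0" using V_const[of X 1] by (simp only: one_fun_def)
lemma V_add[simp]: "X \<in> vfields F \<Longrightarrow> f \<in> F \<Longrightarrow> h \<in> F \<Longrightarrow> X (f + h) = X f + X h"
  unfolding vfields_def by blast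
lemma V_mult[simp]: "X \<in> vfields F \<Longrightarrow> f \<in> F \<Longrightarrow> h \<in> F \<Longrightarrow> X (f * h) = X f * h + f * X h"
  unfolding vfields_def by blast

lemma V_uminus[simp]: "X \<in> vfields F \<Longrightarrow> f \<in> F \<Longrightarrow> X (- f) = - X f"
proof -
  assume a: "X \<in> vfields F" "f \<in> F"
  have "X (f + - f) = X f + X (- f)" using a V_add[of X f "-f"] by simp
  then show ?thesis using a by (simp add: fun_eq_iff algebra_simps) (metis add.commute add_eq_0_iff)
qed
lemma V_diff[simp]: "X \<in> vfields F \<Longrightarrow> f \<in> F \<Longrightarrow> h \<in> F \<Longrightarrow> X (f - h) = X f - X h"
  by (metis V_add V_uminus F_uminus diff_conv_add_uminus)

lemma V_zero_mem[simp]: "(0::'m vfield) \<in> vfields F"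
  unfolding vfields_def mem_Collect_eq by simp
lemma V_memI:
  assumes "\<And>f. f \<in> F \<Longrightarrow> Z f \<in> F" "\<And>c. Z (\<lambda>_. c) = 0"
    "\<And>f h. f \<in> F \<Longrightarrow> h \<in> F \<Longrightarrow> Z (f + h) = Z f + Z h"
    "\<And>f h. f \<in> F \<Longrightarrow> h \<in> F \<Longrightarrow> Z (f * h) = Z f * h + f * Z h"
    "\<And>h. h \<notin> F \<Longrightarrow> Z h = 0"
  shows "Z \<in> vfields F"
  using assms unfolding vfields_def by blast

lemma V_add_mem[simp]: "X \<in> vfields F \<Longrightarrow> Y \<in> vfields F \<Longrightarrow> X + Y \<in> vfields F"
  by (rule V_memI) (simp_all add: V_out fun_eq_iff algebra_simps)
lemma V_uminus_mem[simp]: "X \<in> vfields F \<Longrightarrow> - X \<in> vfields F"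
  by (rule V_memI) (simp_all add: V_out fun_eq_iff algebra_simps)
lemma V_diff_mem[simp]: "X \<in> vfields F \<Longrightarrow> Y \<in> vfields F \<Longrightarrow> X - Y \<in> vfields F"
  by (metis V_add_mem V_uminus_mem diff_conv_add_uminus)
lemma V_smv_mem[simp]: "f \<in> F \<Longrightarrow> X \<in> vfields F \<Longrightarrow> smv f X \<in> vfields F"
  by (rule V_memI) (simp_all add: smv_def V_out fun_eq_iff algebra_simps)
lemma V_lie_mem[simp]: "X \<in> vfields F \<Longrightarrow> Y \<in> vfields F \<Longrightarrow> lie X Y \<in> vfields F"
  by (rule V_memI) (simp_all add: lie_def V_out del: plus_fun_apply times_fun_apply,
      simp_all add: fun_eq_iff algebra_simps)

lemma smv_half_zero: "smv (\<lambda>_. 1/2) K = 0 \<longleftrightarrow> K = 0"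
  by (auto simp: smv_def fun_eq_iff)

lemma vadd_apply[simp]: "((X::'m vfield) + Y) h = X h + Y h" by simp
lemma vdiff_apply[simp]: "((X::'m vfield) - Y) h = X h - Y h" by simp
lemma vuminus_apply[simp]: "(- (X::'m vfield)) h = - X h" by simp
lemma vzero_apply[simp]: "(0::'m vfield) h = 0" by simp
lemma smv_apply[simp]: "smv f X h = f * X h" by (simp add: smv_def)

lemma smv_add2: "smv f (X + Y) = smv f X + smv f Y" by (simp add: smv_def fun_eq_iff algebra_simps)
lemma smv_diff2: "smv f (X - Y) = smv f X - smv f Y" by (simp add: smv_def fun_eq_iff algebra_simps)
lemma smv_uminus2: "smv f (- X) = - smv f X" by (simp add: smv_def fun_eq_iff algebra_simps)
lemma smv_zero2[simp]: "smv f 0 = 0" by (simp add: smv_def fun_eq_iff)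
lemma smv_add1: "smv (f + h) X = smv f X + smv h X" by (simp add: smv_def fun_eq_iff algebra_simps)
lemma smv_diff1: "smv (f - h) X = smv f X - smv h X" by (simp add: smv_def fun_eq_iff algebra_simps)
lemma smv_uminus1: "smv (- f) X = - smv f X" by (simp add: smv_def fun_eq_iff algebra_simps)
lemma smv_zero1[simp]: "smv 0 X = 0" by (simp add: smv_def fun_eq_iff)
lemma smv_one[simp]: "smv 1 X = X" by (simp add: smv_def fun_eq_iff)
lemma smv_smv: "smv f (smv h X) = smv (f * h) X" by (simp add: smv_def fun_eq_iff)

lemmas smv_simps = smv_add2 smv_diff2 smv_uminus2 smv_add1 smv_diff1 smv_uminus1 smv_smv

declare plus_fun_apply[simp del] times_fun_apply[simp del] minus_apply[simp del] uminus_apply[simp del]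
  zero_fun_apply[simp del] one_fun_apply[simp del]

lemma V_addfun: "X \<in> vfields F \<Longrightarrow> Y \<in> vfields F \<Longrightarrow> Z \<in> vfields F \<Longrightarrow> Z (X h + Y h) = Z (X h) + Z (Y h)"
  by (cases "h \<in> F") (simp_all add: V_out)
lemma V_uminusfun: "X \<in> vfields F \<Longrightarrow> Z \<in> vfields F \<Longrightarrow> Z (- X h) = - Z (X h)"
  by (cases "h \<in> F") (simp_all add: V_out)
lemma V_multfun: "X \<in> vfields F \<Longrightarrow> Z \<in> vfields F \<Longrightarrow> f \<in> F \<Longrightarrow> Z (f * X h) = Z f * X h + f * Z (X h)"
  by (cases "h \<in> F") (simp_all add: V_out)

lemmas fun_apps = plus_fun_apply times_fun_apply minus_apply uminus_apply zero_fun_apply one_fun_apply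
lemma lie_anti: "lie X Y = - lie Y X" by (simp add: lie_def fun_eq_iff fun_apps)
lemma lie_self[simp]: "lie X X = 0" by (simp add: lie_def fun_eq_iff fun_apps)

lemma lie_add1: "X \<in> vfields F \<Longrightarrow> Y \<in> vfields F \<Longrightarrow> Z \<in> vfields F \<Longrightarrow> lie (X + Y) Z = lie X Z + lie Y Z"
  by (rule ext) (simp add: lie_def V_addfun algebra_simps)
lemma lie_add2: "X \<in> vfields F \<Longrightarrow> Y \<in> vfields F \<Longrightarrow> Z \<in> vfields F \<Longrightarrow> lie Z (X + Y) = lie Z X + lie Z Y"
  by (rule ext) (simp add: lie_def V_addfun algebra_simps)
lemma lie_uminus1: "X \<in> vfields F \<Longrightarrow> Z \<in> vfields F \<Longrightarrow> lie (- X) Z = - lie X Z"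
  by (rule ext) (simp add: lie_def V_uminusfun algebra_simps)
lemma lie_uminus2: "X \<in> vfields F \<Longrightarrow> Z \<in> vfields F \<Longrightarrow> lie Z (- X) = - lie Z X"
  by (rule ext) (simp add: lie_def V_uminusfun algebra_simps)
lemma lie_diff1: "X \<in> vfields F \<Longrightarrow> Y \<in> vfields F \<Longrightarrow> Z \<in> vfields F \<Longrightarrow> lie (X - Y) Z = lie X Z - lie Y Z"
  by (metis diff_conv_add_uminus lie_add1 lie_uminus1 V_uminus_mem)
lemma lie_diff2: "X \<in> vfields F \<Longrightarrow> Y \<in> vfields F \<Longrightarrow> Z \<in> vfields F \<Longrightarrow> lie Z (X - Y) = lie Z X - lie Z Y"
  by (metis diff_conv_add_uminus lie_add2 lie_uminus2 V_uminus_mem)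
lemma lie_zero1[simp]: "Z \<in> vfields F \<Longrightarrow> lie 0 Z = 0"
  by (rule ext) (simp add: lie_def)
lemma lie_zero2[simp]: "Z \<in> vfields F \<Longrightarrow> lie Z 0 = 0"
  by (rule ext) (simp add: lie_def)
lemma lie_smv1: "f \<in> F \<Longrightarrow> X \<in> vfields F \<Longrightarrow> Y \<in> vfields F \<Longrightarrow>
   lie (smv f X) Y = smv f (lie X Y) - smv (Y f) X"
  by (rule ext) (simp add: lie_def V_multfun algebra_simps)
lemma lie_smv2: "f \<in> F \<Longrightarrow> X \<in> vfields F \<Longrightarrow> Y \<in> vfields F \<Longrightarrow>
   lie Y (smv f X) = smv f (lie Y X) + smv (Y f) X"
  by (rule ext) (simp add: lie_def V_multfun algebra_simps)

lemmas lie_simps = lie_add1 lie_add2 lie_uminus1 lie_uminus2 lie_diff1 lie_diff2 lie_smv1 lie_smv2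

lemma T11: "tensor11 F \<phi>" using acm by (simp add: almost_contact_metric_def)
lemma OF1: "one_form F \<eta>" using acm by (simp add: almost_contact_metric_def)
lemma xi_V[simp]: "\<xi> \<in> vfields F" using acm by (simp add: almost_contact_metric_def)
lemma eta_xi[simp]: "\<eta> \<xi> = 1" using acm by (simp add: almost_contact_metric_def)
lemma phiphi: "X \<in> vfields F \<Longrightarrow> \<phi> (\<phi> X) = - X + smv (\<eta> X) \<xi>"
  using acm by (simp add: almost_contact_metric_def)

lemma phi_V[simp]: "X \<in> vfields F \<Longrightarrow> \<phi> X \<in> vfields F" using T11 by (simp add: tensor11_def)
lemma phi_add: "X \<in> vfields F \<Longrightarrow> Y \<in> vfields F \<Longrightarrow> \<phi> (X + Y) = \<phi> X + \<phi> Y"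
  using T11 by (simp add: tensor11_def)
lemma phi_smv: "f \<in> F \<Longrightarrow> X \<in> vfields F \<Longrightarrow> \<phi> (smv f X) = smv f (\<phi> X)"
  using T11 by (simp add: tensor11_def)
lemma phi_zero[simp]: "\<phi> 0 = 0"
  using phi_add[of 0 0] by simp
lemma phi_uminus: "X \<in> vfields F \<Longrightarrow> \<phi> (- X) = - \<phi> X"
  using phi_add[of X "- X"] by (simp add: eq_neg_iff_add_eq_0 add.commute)
lemma phi_diff: "X \<in> vfields F \<Longrightarrow> Y \<in> vfields F \<Longrightarrow> \<phi> (X - Y) = \<phi> X - \<phi> Y"
  by (metis diff_conv_add_uminus phi_add phi_uminus V_uminus_mem)

lemma eta_F[simp]: "X \<in> vfields F \<Longrightarrow> \<eta> X \<in> F" using OF1 by (simp add: one_form_def)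
lemma eta_add: "X \<in> vfields F \<Longrightarrow> Y \<in> vfields F \<Longrightarrow> \<eta> (X + Y) = \<eta> X + \<eta> Y"
  using OF1 by (simp add: one_form_def)
lemma eta_smv: "f \<in> F \<Longrightarrow> X \<in> vfields F \<Longrightarrow> \<eta> (smv f X) = f * \<eta> X"
  using OF1 by (simp add: one_form_def)
lemma eta_zero[simp]: "\<eta> 0 = 0"
  using eta_add[of 0 0] by simp
lemma eta_uminus: "X \<in> vfields F \<Longrightarrow> \<eta> (- X) = - \<eta> X"
  using eta_add[of X "- X"] by (simp add: eq_neg_iff_add_eq_0 add.commute)
lemma eta_diff: "X \<in> vfields F \<Longrightarrow> Y \<in> vfields F \<Longrightarrow> \<eta> (X - Y) = \<eta> X - \<eta> Y"
  by (metis diff_conv_add_uminus eta_add eta_uminus V_uminus_mem)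

lemmas lin_simps = phi_add phi_smv phi_uminus phi_diff eta_add eta_smv eta_uminus eta_diff

lemma phi_xi[simp]: "\<phi> \<xi> = 0"
proof -
  define a where "a = \<eta> (\<phi> \<xi>)"
  have aF: "a \<in> F" by (simp add: a_def)
  have h1: "\<phi> (\<phi> \<xi>) = 0" by (simp add: phiphi)
  have "\<phi> (\<phi> (\<phi> \<xi>)) = - \<phi> \<xi> + smv a \<xi>" unfolding a_def by (rule phiphi) simp
  then have "0 = - \<phi> \<xi> + smv a \<xi>" using h1 by simp
  then have h2: "\<phi> \<xi> = smv a \<xi>" by (metis add.commute add_eq_0_iff minus_add_cancel add_0)
  have "\<phi> (\<phi> \<xi>) = \<phi> (smv a \<xi>)" using h2 by simp
  also have "\<dots> = smv a (\<phi> \<xi>)" using aF by (simp add: phi_smv)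
  also have "\<dots> = smv (a * a) \<xi>" using h2 by (simp add: smv_smv)
  finally have "smv (a * a) \<xi> = 0" using h1 by simp
  then have "\<eta> (smv (a * a) \<xi>) = 0" by simp
  then have "a * a = 0" using aF by (simp add: eta_smv)
  then have "a = 0" by (simp add: fun_eq_iff fun_apps)
  then show ?thesis using h2 by simp
qed

lemma eta_phi[simp]: "X \<in> vfields F \<Longrightarrow> \<eta> (\<phi> X) = 0"
proof -
  assume X: "X \<in> vfields F"
  have "\<phi> (\<phi> (\<phi> X)) = - \<phi> X + smv (\<eta> (\<phi> X)) \<xi>" using X by (rule phiphi[OF phi_V])
  moreover have "\<phi> (\<phi> (\<phi> X)) = - \<phi> X" using X by (simp add: phiphi lin_simps)
  ultimately have "smv (\<eta> (\<phi> X)) \<xi> = 0" by simp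
  then have "\<eta> (smv (\<eta> (\<phi> X)) \<xi>) = 0" by simp
  then show ?thesis using X by (simp add: eta_smv)
qed

lemma deta_add1: "X \<in> vfields F \<Longrightarrow> Y \<in> vfields F \<Longrightarrow> Z \<in> vfields F \<Longrightarrow>
  two_d_eta \<eta> (X + Y) Z = two_d_eta \<eta> X Z + two_d_eta \<eta> Y Z"
  by (simp add: two_d_eta_def lie_simps lin_simps algebra_simps)
lemma nij_add1: "X \<in> vfields F \<Longrightarrow> Y \<in> vfields F \<Longrightarrow> Z \<in> vfields F \<Longrightarrow>
  nijenhuis \<phi> (X + Y) Z = nijenhuis \<phi> X Z + nijenhuis \<phi> Y Z"
  by (simp add: nijenhuis_def lie_simps lin_simps algebra_simps)
lemma N1_add1: "X \<in> vfields F \<Longrightarrow> Y \<in> vfields F \<Longrightarrow> Z \<in> vfields F \<Longrightarrow>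
  N1 \<phi> \<xi> \<eta> (X + Y) Z = N1 \<phi> \<xi> \<eta> X Z + N1 \<phi> \<xi> \<eta> Y Z"
  by (simp add: N1_def deta_add1 nij_add1 smv_add1 algebra_simps)

lemma deta_anti: "X \<in> vfields F \<Longrightarrow> Y \<in> vfields F \<Longrightarrow> two_d_eta \<eta> X Y = - two_d_eta \<eta> Y X"
  by (simp add: two_d_eta_def lie_anti[of Y X] lin_simps algebra_simps)
lemma nij_anti: "X \<in> vfields F \<Longrightarrow> Y \<in> vfields F \<Longrightarrow> nijenhuis \<phi> X Y = - nijenhuis \<phi> Y X"
  by (simp add: nijenhuis_def lie_anti[of Y X] lie_anti[of "\<phi> Y" "\<phi> X"] lie_anti[of "\<phi> Y" X]
      lie_anti[of Y "\<phi> X"] lin_simps algebra_simps)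
lemma N1_anti: "X \<in> vfields F \<Longrightarrow> Y \<in> vfields F \<Longrightarrow> N1 \<phi> \<xi> \<eta> X Y = - N1 \<phi> \<xi> \<eta> Y X"
  by (simp add: N1_def nij_anti[of X Y] deta_anti[of X Y] smv_uminus1 algebra_simps)

lemma deta_smv1: "f \<in> F \<Longrightarrow> X \<in> vfields F \<Longrightarrow> Y \<in> vfields F \<Longrightarrow>
  two_d_eta \<eta> (smv f X) Y = f * two_d_eta \<eta> X Y"
  by (simp add: two_d_eta_def lie_simps lin_simps algebra_simps)
lemma nij_smv1: "f \<in> F \<Longrightarrow> X \<in> vfields F \<Longrightarrow> Y \<in> vfields F \<Longrightarrow>
  nijenhuis \<phi> (smv f X) Y = smv f (nijenhuis \<phi> X Y)"
  by (simp add: nijenhuis_def lie_simps lin_simps smv_simps algebra_simps)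
lemma N1_smv1: "f \<in> F \<Longrightarrow> X \<in> vfields F \<Longrightarrow> Y \<in> vfields F \<Longrightarrow>
  N1 \<phi> \<xi> \<eta> (smv f X) Y = smv f (N1 \<phi> \<xi> \<eta> X Y)"
  by (simp add: N1_def deta_smv1 nij_smv1 smv_add2 smv_smv)

lemma nij_xi: "Y \<in> vfields F \<Longrightarrow> nijenhuis \<phi> \<xi> Y = \<phi> (\<phi> (lie \<xi> Y)) - \<phi> (lie \<xi> (\<phi> Y))"
  by (simp add: nijenhuis_def)
lemma deta_xi: "Y \<in> vfields F \<Longrightarrow> two_d_eta \<eta> \<xi> Y = \<xi> (\<eta> Y) - \<eta> (lie \<xi> Y)"
  by (simp add: two_d_eta_def)

lemma h_zero_iff: "h_zero F \<phi> \<xi> \<longleftrightarrow> (\<forall>X\<in>vfields F. lie \<xi> (\<phi> X) = \<phi> (lie \<xi> X))"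
  by (simp add: h_zero_def h_op_def smv_half_zero)

lemma normal_h: assumes N: "normal F \<phi> \<xi> \<eta>" shows "h_zero F \<phi> \<xi>"
  unfolding h_zero_iff
proof
  fix X assume X: "X \<in> vfields F"
  define L where "L = lie \<xi> X"
  define M where "M = lie \<xi> (\<phi> X)"
  have LV: "L \<in> vfields F" and MV: "M \<in> vfields F" using X by (simp_all add: L_def M_def)
  have "N1 \<phi> \<xi> \<eta> \<xi> (\<phi> X) = 0" using N X by (simp add: normal_def)
  then have "\<eta> (N1 \<phi> \<xi> \<eta> \<xi> (\<phi> X)) = 0" by simp
  then have eM: "\<eta> M = 0" using X
    by (simp add: N1_def nij_xi deta_xi lin_simps M_def)
  have "N1 \<phi> \<xi> \<eta> \<xi> X = 0" using N X by (simp add: normal_def)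
  then have "\<phi> (\<phi> L) - \<phi> M + smv (two_d_eta \<eta> \<xi> X) \<xi> = 0"
    using X by (simp add: N1_def nij_xi L_def M_def)
  then have "\<phi> (\<phi> (\<phi> L) - \<phi> M + smv (two_d_eta \<eta> \<xi> X) \<xi>) = 0" by simp
  then have "\<phi> (\<phi> (\<phi> L)) - \<phi> (\<phi> M) = 0"
    using X LV MV by (simp add: lin_simps two_d_eta_def)
  then have "- \<phi> L + M = 0"
    using LV MV eM by (simp add: phiphi lin_simps)
  then show "M = \<phi> L" by (simp add: algebra_simps)
qed

lemma h_N1_xi: assumes H: "h_zero F \<phi> \<xi>" and X: "X \<in> vfields F"
  shows "N1 \<phi> \<xi> \<eta> \<xi> X = 0"
proof -
  have H': "\<And>Y. Y \<in> vfields F \<Longrightarrow> lie \<xi> (\<phi> Y) = \<phi> (lie \<xi> Y)" using H by (simp add: h_zero_iff)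
  define L where "L = lie \<xi> X"
  have LV: "L \<in> vfields F" using X by (simp add: L_def)
  have M: "lie \<xi> (\<phi> X) = \<phi> L" using H' X by (simp add: L_def)
  have "lie \<xi> (\<phi> (\<phi> X)) = \<phi> (lie \<xi> (\<phi> X))" using H' X by simp
  then have "lie \<xi> (- X + smv (\<eta> X) \<xi>) = \<phi> (\<phi> L)" using X by (simp add: phiphi M)
  then have "- L + smv (\<xi> (\<eta> X)) \<xi> = - L + smv (\<eta> L) \<xi>"
    using X LV by (simp add: lie_simps phiphi L_def)
  then have "smv (\<xi> (\<eta> X)) \<xi> = smv (\<eta> L) \<xi>" by simp
  then have "\<eta> (smv (\<xi> (\<eta> X)) \<xi>) = \<eta> (smv (\<eta> L) \<xi>)" by simp
  then have d: "\<xi> (\<eta> X) = \<eta> L" using X LV by (simp add: eta_smv)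
  show ?thesis using X by (simp add: N1_def nij_xi deta_xi M d L_def[symmetric])
qed

lemma N1_proj: assumes H: "h_zero F \<phi> \<xi>" and X: "X \<in> vfields F" and Y: "Y \<in> vfields F"
  shows "N1 \<phi> \<xi> \<eta> X Y = N1 \<phi> \<xi> \<eta> (X - smv (\<eta> X) \<xi>) Y"
proof -
  have "X = (X - smv (\<eta> X) \<xi>) + smv (\<eta> X) \<xi>" by simp
  then have "N1 \<phi> \<xi> \<eta> X Y = N1 \<phi> \<xi> \<eta> ((X - smv (\<eta> X) \<xi>) + smv (\<eta> X) \<xi>) Y" by simp
  also have "\<dots> = N1 \<phi> \<xi> \<eta> (X - smv (\<eta> X) \<xi>) Y + smv (\<eta> X) (N1 \<phi> \<xi> \<eta> \<xi> Y)"
    using X Y N1_add1[of "X - smv (\<eta> X) \<xi>" "smv (\<eta> X) \<xi>" Y] N1_smv1[of "\<eta> X" \<xi> Y] by simp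
  also have "\<dots> = N1 \<phi> \<xi> \<eta> (X - smv (\<eta> X) \<xi>) Y" using h_N1_xi[OF H Y] by simp
  finally show ?thesis .
qed

lemma eta_proj: "X \<in> vfields F \<Longrightarrow> \<eta> (X - smv (\<eta> X) \<xi>) = 0"
  by (simp add: lin_simps)

lemma etaN_h_normal: assumes E: "eta_normal F \<phi> \<xi> \<eta>" and H: "h_zero F \<phi> \<xi>"
  shows "normal F \<phi> \<xi> \<eta>"
  unfolding normal_def
proof (intro ballI)
  fix X Y assume X: "X \<in> vfields F" and Y: "Y \<in> vfields F"
  define X0 where "X0 = X - smv (\<eta> X) \<xi>"
  define Y0 where "Y0 = Y - smv (\<eta> Y) \<xi>"
  have X0: "X0 \<in> vfields F" "\<eta> X0 = 0" using X by (simp_all add: X0_def eta_proj)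
  have Y0: "Y0 \<in> vfields F" "\<eta> Y0 = 0" using Y by (simp_all add: Y0_def eta_proj)
  have "N1 \<phi> \<xi> \<eta> X Y = N1 \<phi> \<xi> \<eta> X0 Y" using N1_proj[OF H X Y] by (simp add: X0_def)
  also have "\<dots> = - N1 \<phi> \<xi> \<eta> Y X0" using X0 Y by (simp add: N1_anti[of X0 Y])
  also have "\<dots> = - N1 \<phi> \<xi> \<eta> Y0 X0" using N1_proj[OF H Y X0(1)] by (simp add: Y0_def)
  also have "\<dots> = N1 \<phi> \<xi> \<eta> X0 Y0" using X0 Y0 by (simp add: N1_anti[of Y0 X0])
  also have "\<dots> = 0" using E X0 Y0 by (simp add: eta_normal_def)
  finally show "N1 \<phi> \<xi> \<eta> X Y = 0" .
qed

lemma N1_horiz: "X \<in> vfields F \<Longrightarrow> Y \<in> vfields F \<Longrightarrow> \<eta> X = 0 \<Longrightarrow> \<eta> Y = 0 \<Longrightarrow>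
  N1 \<phi> \<xi> \<eta> X Y = - (lie X Y - lie (\<phi> X) (\<phi> Y)) - \<phi> (lie (\<phi> X) Y + lie X (\<phi> Y))"
  by (simp add: N1_def nijenhuis_def two_d_eta_def phiphi lin_simps smv_simps algebra_simps)

lemma clie_cr: "X \<in> vfields F \<Longrightarrow> Y \<in> vfields F \<Longrightarrow>
  clie (cr_vec \<phi> X) (cr_vec \<phi> Y) = (lie X Y - lie (\<phi> X) (\<phi> Y), - (lie (\<phi> X) Y + lie X (\<phi> Y)))"
  by (simp add: clie_def cr_vec_def lie_simps algebra_simps)

lemma CR_etaN: "CR_manifold F \<phi> \<eta> \<longleftrightarrow> eta_normal F \<phi> \<xi> \<eta>"
proof
  assume C: "CR_manifold F \<phi> \<eta>"
  show "eta_normal F \<phi> \<xi> \<eta>" unfolding eta_normal_def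
  proof (intro ballI impI)
    fix X Y assume X: "X \<in> vfields F" and Y: "Y \<in> vfields F" and eX: "\<eta> X = 0" and eY: "\<eta> Y = 0"
    obtain Z where Z: "Z \<in> vfields F" "\<eta> Z = 0" and E: "clie (cr_vec \<phi> X) (cr_vec \<phi> Y) = cr_vec \<phi> Z"
      using C X Y eX eY unfolding CR_manifold_def by blast
    have P: "lie X Y - lie (\<phi> X) (\<phi> Y) = Z \<and> - (lie (\<phi> X) Y + lie X (\<phi> Y)) = - \<phi> Z"
      using trans[OF clie_cr[OF X Y, symmetric] E] unfolding cr_vec_def prod.inject .
    have Z1: "lie X Y - lie (\<phi> X) (\<phi> Y) = Z" using P by blast
    have Z2: "lie (\<phi> X) Y + lie X (\<phi> Y) = \<phi> Z" using P neg_equal_iff_equal by blast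
    show "N1 \<phi> \<xi> \<eta> X Y = 0" using X Y eX eY Z
      by (simp add: N1_horiz Z1 Z2 phiphi)
  qed
next
  assume E: "eta_normal F \<phi> \<xi> \<eta>"
  show "CR_manifold F \<phi> \<eta>" unfolding CR_manifold_def
  proof (intro ballI impI)
    fix X Y assume X: "X \<in> vfields F" and Y: "Y \<in> vfields F" and eX: "\<eta> X = 0" and eY: "\<eta> Y = 0"
    define Z where "Z = lie X Y - lie (\<phi> X) (\<phi> Y)"
    define W where "W = lie (\<phi> X) Y + lie X (\<phi> Y)"
    have ZV: "Z \<in> vfields F" and WV: "W \<in> vfields F" using X Y by (simp_all add: Z_def W_def)
    have "N1 \<phi> \<xi> \<eta> X Y = 0" using E X Y eX eY by (simp add: eta_normal_def)
    then have "- Z - \<phi> W = 0" using X Y eX eY by (simp add: N1_horiz Z_def W_def)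
    then have "- Z = \<phi> W" by (simp add: algebra_simps)
    then have ZW: "Z = - \<phi> W" by (metis minus_minus)
    have eZ: "\<eta> Z = 0" using WV by (simp add: ZW lin_simps)
    have "N1 \<phi> \<xi> \<eta> X (\<phi> Y) = 0" using E X Y eX by (simp add: eta_normal_def)
    then have "- (lie X (\<phi> Y) - lie (\<phi> X) (\<phi> (\<phi> Y))) - \<phi> (lie (\<phi> X) (\<phi> Y) + lie X (\<phi> (\<phi> Y))) = 0"
      using X Y eX by (simp add: N1_horiz)
    then have "- W - \<phi> (lie (\<phi> X) (\<phi> Y) + lie X (\<phi> (\<phi> Y))) = 0"
      using X Y eY by (simp add: phiphi W_def lie_simps algebra_simps)
    then have "\<eta> (- W - \<phi> (lie (\<phi> X) (\<phi> Y) + lie X (\<phi> (\<phi> Y)))) = 0" by simp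
    then have eW: "\<eta> W = 0" using X Y WV by (simp add: lin_simps)
    have "\<phi> Z = W" using WV eW by (simp add: ZW lin_simps phiphi)
    moreover have "clie (cr_vec \<phi> X) (cr_vec \<phi> Y) = (Z, - W)"
      using clie_cr[OF X Y] by (simp only: Z_def W_def)
    ultimately have "clie (cr_vec \<phi> X) (cr_vec \<phi> Y) = cr_vec \<phi> Z"
      by (simp add: cr_vec_def)
    then show "\<exists>Z\<in>vfields F. \<eta> Z = 0 \<and> clie (cr_vec \<phi> X) (cr_vec \<phi> Y) = cr_vec \<phi> Z"
      using ZV eZ by blast
  qed
qed

end

theorem mainTheorem3:
  fixes F :: "('m \<Rightarrow> real) set"
    and \<phi> :: "'m vfield \<Rightarrow> 'm vfield" and \<xi> :: "'m vfield"
    and \<eta> :: "'m vfield \<Rightarrow> ('m \<Rightarrow> real)" and g :: "'m vfield \<Rightarrow> 'm vfield \<Rightarrow> ('m \<Rightarrow> real)"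
  assumes "almost_contact_metric F \<phi> \<xi> \<eta> g"
  shows "((CR_manifold F \<phi> \<eta> \<and> h_zero F \<phi> \<xi>) \<longleftrightarrow> (eta_normal F \<phi> \<xi> \<eta> \<and> h_zero F \<phi> \<xi>))
       \<and> ((eta_normal F \<phi> \<xi> \<eta> \<and> h_zero F \<phi> \<xi>) \<longleftrightarrow> normal F \<phi> \<xi> \<eta>)"
proof -
  have "normal F \<phi> \<xi> \<eta> \<Longrightarrow> eta_normal F \<phi> \<xi> \<eta>" by (simp add: normal_def eta_normal_def)
  then show ?thesis
    using CR_etaN[OF assms] normal_h[OF assms] etaN_h_normal[OF assms] by blast
qed

end
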